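(* Let $\Gamma$ be a finitely generated non-abelian free group and $\rho:\Gamma\to\mathrm{SL}_3(\mathbb{R})$ a reducible suspension preserving the hyperplane $P$. If $\rho$ is quasi-isometric, then for every $\gamma\in\Gamma\setminus\{1\}$ the element $\rho_P(\gamma)$ is hyperbolic, i.e. its two eigenvalues are real with distinct moduli.
   Context: A reducible suspension is a representation $\rho:\Gamma\to\mathrm{SL}_3(\mathbb{R})$ preserving a 2-dimensional subspace $P$; $\rho_P(\gamma):=|\det_P(\rho(\gamma))|^{-1/2}\rho(\gamma)|_P\in\mathrm{SL}^{\pm}(P)$, with $P$ given the volume form inherited from $\mathbb{R}^3$. $\rho$ is quasi-isometric if there are $a\ge1,b\ge0$ with $\log\|\rho(\gamma)\|\ge a^{-1}|\gamma|-b$ for all $\gamma$, where $|\cdot|$ is word length for a fixed finite symmetric generating set (equivalently, $\rho$ is a quasi-isometric embedding). *)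

theory Defs
  imports "HOL-Analysis.Analysis" "HOL-Analysis.Cross3"
begin

section \<open>The free group on a finite alphabet 'a, as reduced words\<close>

text \<open>A letter (x, True) stands for the generator x, (x, False) for its inverse.\<close>

type_synonym 'a fword = "('a \<times> bool) list"

fun fg_reduced :: "'a fword \<Rightarrow> bool" where
  "fg_reduced [] = True"
| "fg_reduced [_] = True"
| "fg_reduced ((x,b) # (y,c) # w) = (\<not> (x = y \<and> b \<noteq> c) \<and> fg_reduced ((y,c) # w))"

definition fg_carrier :: "'a fword set" where
  "fg_carrier = {w. fg_reduced w}"

fun fg_cons :: "'a \<times> bool \<Rightarrow> 'a fword \<Rightarrow> 'a fword" where
  "fg_cons l [] = [l]"
| "fg_cons (x,b) ((y,c) # w) = (if x = y \<and> b \<noteq> c then w else (x,b) # (y,c) # w)"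

text \<open>Product of group elements: free reduction of the concatenation.\<close>
definition fg_mult :: "'a fword \<Rightarrow> 'a fword \<Rightarrow> 'a fword" where
  "fg_mult u v = foldr fg_cons u v"

definition fg_inv :: "'a fword \<Rightarrow> 'a fword" where
  "fg_inv w = rev (map (\<lambda>(x,b). (x, \<not> b)) w)"

text \<open>Product of a list of group elements.\<close>
definition fg_prod :: "'a fword list \<Rightarrow> 'a fword" where
  "fg_prod ws = foldr fg_mult ws []"

text \<open>Finite symmetric generating set of the free group.\<close>
definition fin_sym_gen_set :: "'a fword set \<Rightarrow> bool" where
  "fin_sym_gen_set S \<longleftrightarrow> finite S \<and> S \<subseteq> fg_carrier \<and> (\<forall>s\<in>S. fg_inv s \<in> S)
     \<and> (\<forall>g\<in>fg_carrier. \<exists>ws. set ws \<subseteq> S \<and> fg_prod ws = g)"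

text \<open>Word length with respect to the generating set S.\<close>
definition word_length :: "'a fword set \<Rightarrow> 'a fword \<Rightarrow> nat" where
  "word_length S g = (LEAST n. \<exists>ws. length ws = n \<and> set ws \<subseteq> S \<and> fg_prod ws = g)"

section \<open>Representations into SL(3,R)\<close>

definition is_SL3_rep :: "('a fword \<Rightarrow> real^3^3) \<Rightarrow> bool" where
  "is_SL3_rep \<rho> \<longleftrightarrow> (\<forall>g\<in>fg_carrier. det (\<rho> g) = 1)
     \<and> (\<forall>g\<in>fg_carrier. \<forall>h\<in>fg_carrier. \<rho> (fg_mult g h) = \<rho> g ** \<rho> h)"

text \<open>Reducible suspension: preserves a 2-dimensional linear subspace P.\<close>
definition reducible_suspension :: "('a fword \<Rightarrow> real^3^3) \<Rightarrow> (real^3) set \<Rightarrow> bool" where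
  "reducible_suspension \<rho> P \<longleftrightarrow> is_SL3_rep \<rho> \<and> subspace P \<and> dim P = 2
     \<and> (\<forall>g\<in>fg_carrier. \<forall>x\<in>P. \<rho> g *v x \<in> P)"

text \<open>Determinant of the restriction of A to the 2-plane P (w.r.t. the area form on P
  inherited from R^3): the factor by which A scales oriented areas in P.\<close>
definition det_P :: "(real^3) set \<Rightarrow> real^3^3 \<Rightarrow> real" where
  "det_P P A = (THE d. \<forall>u\<in>P. \<forall>v\<in>P. cross3 (A *v u) (A *v v) = d *\<^sub>R cross3 u v)"

text \<open>rho_P(g) = |det_P(rho(g))|^(-1/2) rho(g)|_P, as a map on P.\<close>
definition rho_P :: "('a fword \<Rightarrow> real^3^3) \<Rightarrow> (real^3) set \<Rightarrow> 'a fword \<Rightarrow> real^3 \<Rightarrow> real^3" where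
  "rho_P \<rho> P g x = (inverse (sqrt \<bar>det_P P (\<rho> g)\<bar>)) *\<^sub>R (\<rho> g *v x)"

text \<open>Quasi-isometric: log of the operator norm grows at least linearly in word length.\<close>
definition quasi_isometric :: "'a fword set \<Rightarrow> ('a fword \<Rightarrow> real^3^3) \<Rightarrow> bool" where
  "quasi_isometric S \<rho> \<longleftrightarrow> (\<exists>a b. a \<ge> 1 \<and> b \<ge> 0 \<and>
     (\<forall>g\<in>fg_carrier. ln (onorm (\<lambda>x. \<rho> g *v x)) \<ge> real (word_length S g) / a - b))"

text \<open>A linear map of the 2-plane P is hyperbolic: its two eigenvalues are real with
  distinct moduli (two real eigenvalues of distinct modulus on a 2-dimensional space are
  necessarily all of its eigenvalues).\<close>
definition hyperbolic_on :: "(real^3) set \<Rightarrow> (real^3 \<Rightarrow> real^3) \<Rightarrow> bool" where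
  "hyperbolic_on P f \<longleftrightarrow> (\<exists>l1 l2 u1 u2. u1 \<in> P \<and> u2 \<in> P \<and> u1 \<noteq> 0 \<and> u2 \<noteq> 0 \<and>
     f u1 = l1 *\<^sub>R u1 \<and> f u2 = l2 *\<^sub>R u2 \<and> \<bar>l1\<bar> \<noteq> \<bar>l2\<bar>)"

end

theory Submission
  imports Defs
begin

(* ---- A.thy ---- *)

definition fcancel :: "('a \<times> bool) \<Rightarrow> ('a \<times> bool) \<Rightarrow> bool" where
  "fcancel p q \<longleftrightarrow> fst p = fst q \<and> snd p \<noteq> snd q"

definition linv :: "('a \<times> bool) \<Rightarrow> ('a \<times> bool)" where
  "linv p = (fst p, \<not> snd p)"

lemma fg_reduced_succ: "fg_reduced w = successively (\<lambda>p q. \<not> fcancel p q) w"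
  by (induction w rule: fg_reduced.induct) (auto simp: fcancel_def)

lemma fg_cons_red: "fg_reduced (a # w) \<Longrightarrow> fg_cons a w = a # w"
  by (cases a; cases w) auto

lemma fg_mult_Cons: "fg_mult (a # u) v = fg_cons a (fg_mult u v)"
  by (simp add: fg_mult_def)

lemma fg_mult_Nil: "fg_mult [] v = v"
  by (simp add: fg_mult_def)

lemma fg_mult_app: "fg_reduced (u @ v) \<Longrightarrow> fg_mult u v = u @ v"
proof (induction u)
  case Nil then show ?case by (simp add: fg_mult_Nil)
next
  case (Cons a u)
  have "fg_reduced (u @ v)" using Cons.prems by (auto simp: fg_reduced_succ successively_Cons)
  then show ?case using Cons by (simp add: fg_mult_Cons fg_cons_red)
qed

lemma fg_inv_Cons: "fg_inv (a # u) = fg_inv u @ [linv a]"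
  by (cases a) (simp add: fg_inv_def linv_def)

lemma fg_cons_linv: "fg_cons a (linv a # z) = z"
  by (cases a) (simp add: linv_def)

lemma fg_mult_inv_gen: "fg_mult u (fg_inv u @ z) = z"
proof (induction u arbitrary: z)
  case Nil then show ?case by (simp add: fg_mult_Nil fg_inv_def)
next
  case (Cons a u)
  have "fg_mult (a # u) (fg_inv (a # u) @ z) = fg_cons a (fg_mult u (fg_inv u @ (linv a # z)))"
    by (simp add: fg_mult_Cons fg_inv_Cons)
  also have "\<dots> = z" using Cons.IH by (simp add: fg_cons_linv)
  finally show ?case .
qed

lemma fg_mult_inv: "fg_mult u (fg_inv u) = []"
  using fg_mult_inv_gen[of u "[]"] by simp

lemma fg_inv_inv: "fg_inv (fg_inv u) = u"
  by (simp add: fg_inv_def rev_map o_def case_prod_beta)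

lemma fg_red_inv: "fg_reduced w \<Longrightarrow> fg_reduced (fg_inv w)"
  unfolding fg_reduced_succ fg_inv_def successively_rev successively_map
  by (erule successively_mono) (auto simp: fcancel_def)

lemma len_fg_cons: "length (fg_cons a w) \<le> Suc (length w)"
  by (cases a; cases w) auto

lemma len_fg_mult: "length (fg_mult u v) \<le> length u + length v"
proof (induction u)
  case Nil then show ?case by (simp add: fg_mult_Nil)
next
  case (Cons a u) then show ?case
    using len_fg_cons[of a "fg_mult u v"] by (simp add: fg_mult_Cons)
qed

lemma len_fg_prod: "length (fg_prod ws) \<le> sum_list (map length ws)"
proof (induction ws)
  case Nil then show ?case by (simp add: fg_prod_def)
next
  case (Cons w ws) then show ?case
    using len_fg_mult[of w "fg_prod ws"] by (simp add: fg_prod_def)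
qed

definition wpow :: "'b list \<Rightarrow> nat \<Rightarrow> 'b list" where
  "wpow c k = concat (replicate k c)"

definition cycred :: "'a fword \<Rightarrow> bool" where
  "cycred c \<longleftrightarrow> c \<noteq> [] \<and> fg_reduced c \<and> \<not> fcancel (last c) (hd c)"

lemma wpow_Suc: "wpow c (Suc k) = c @ wpow c k"
  by (simp add: wpow_def)

lemma wpow_0: "wpow c 0 = []"
  by (simp add: wpow_def)

lemma wpow_len: "length (wpow c k) = k * length c"
  by (induction k) (auto simp: wpow_def)

lemma wpow_hd_last: "c \<noteq> [] \<Longrightarrow> hd (wpow c (Suc k)) = hd c \<and> last (wpow c (Suc k)) = last c"
  by (induction k) (auto simp: wpow_def)

lemma wpow_red: "cycred c \<Longrightarrow> fg_reduced (wpow c k)"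
proof (induction k)
  case 0 then show ?case by (simp add: wpow_def)
next
  case (Suc k)
  show ?case
  proof (cases k)
    case 0 then show ?thesis using Suc.prems by (simp add: wpow_def cycred_def)
  next
    case (Suc j)
    have "wpow c k \<noteq> []" using Suc Suc.prems by (simp add: wpow_Suc cycred_def)
    moreover have "hd (wpow c k) = hd c" using wpow_hd_last[of c j] Suc Suc.prems by (simp add: cycred_def)
    ultimately show ?thesis using Suc.IH Suc.prems
      by (auto simp: wpow_Suc fg_reduced_succ successively_append_iff cycred_def)
  qed
qed

lemma wpow_mult: "cycred c \<Longrightarrow> fg_mult c (wpow c k) = wpow c (Suc k)"
  using wpow_red[of c "Suc k"] by (simp add: wpow_Suc fg_mult_app)

lemma fg_inv_hd_last: "c \<noteq> [] \<Longrightarrow> hd (fg_inv c) = linv (last c) \<and> last (fg_inv c) = linv (hd c)"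
  by (cases c rule: rev_cases) (auto simp: fg_inv_def linv_def case_prod_beta hd_map last_map
      neq_Nil_conv)

lemma cycred_inv: "cycred c \<Longrightarrow> cycred (fg_inv c)"
  using fg_inv_hd_last[of c] fg_red_inv[of c]
  by (auto simp: cycred_def fcancel_def linv_def fg_inv_def)

definition fam :: "'a fword \<Rightarrow> 'a \<Rightarrow> nat \<Rightarrow> 'a fword" where
  "fam c y k = wpow c k @ [(y, True)] @ wpow (fg_inv c) k"

lemma fam_red:
  assumes "cycred c" "y \<noteq> fst (last c)"
  shows "fg_reduced (fam c y k)"
proof (cases k)
  case 0 then show ?thesis by (simp add: fam_def wpow_def)
next
  case (Suc j)
  have c: "c \<noteq> []" using assms by (simp add: cycred_def)
  have r1: "fg_reduced (wpow c k)" using wpow_red assms by blast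
  have r2: "fg_reduced (wpow (fg_inv c) k)" using wpow_red cycred_inv assms by blast
  have l1: "last (wpow c k) = last c" using wpow_hd_last[OF c, of j] Suc by simp
  have ci: "fg_inv c \<noteq> []" using c by (simp add: fg_inv_def)
  have h2: "hd (wpow (fg_inv c) k) = linv (last c)" using wpow_hd_last[OF ci, of j] Suc fg_inv_hd_last[OF c] by simp
  have ne1: "wpow c k \<noteq> []" using Suc c by (simp add: wpow_Suc)
  have ne2: "wpow (fg_inv c) k \<noteq> []" using Suc ci by (simp add: wpow_Suc)
  show ?thesis using r1 r2 l1 h2 ne1 ne2 assms(2)
    by (auto simp: fam_def fg_reduced_succ successively_append_iff fcancel_def linv_def successively_Cons)
qed

lemma fam_mult:
  assumes "cycred c" "y \<noteq> fst (last c)"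
  shows "fam c y k = fg_mult (wpow c k) (fg_mult [(y,True)] (wpow (fg_inv c) k))"
proof -
  have r: "fg_reduced (fam c y k)" using fam_red[OF assms] by blast
  have r2: "fg_reduced ([(y,True)] @ wpow (fg_inv c) k)"
    using r unfolding fam_def fg_reduced_succ successively_append_iff by auto
  show ?thesis using r r2 by (simp add: fg_mult_app fam_def)
qed

lemma fam_len: "cycred c \<Longrightarrow> length (fam c y k) \<ge> 2 * k + 1"
proof -
  assume "cycred c"
  then have "length c \<ge> 1" "length (fg_inv c) \<ge> 1" by (auto simp: cycred_def fg_inv_def Suc_le_eq)
  then have "k * length c \<ge> k" "k * length (fg_inv c) \<ge> k" by simp_all
  moreover have "length (fam c y k) = k * length c + 1 + k * length (fg_inv c)"
    by (simp add: fam_def wpow_len)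
  ultimately show ?thesis by linarith
qed

lemma decomp_noncyc:
  assumes "fg_reduced g" "g \<noteq> []" "\<not> cycred g"
  obtains a g' where "g = [a] @ g' @ [linv a]" "g' \<noteq> []" "fg_reduced g'"
proof -
  obtain a r where g: "g = a # r" using assms(2) by (cases g) auto
  have fc: "fcancel (last g) a" using assms by (simp add: cycred_def g)
  have "r \<noteq> []" using fc g by (auto simp: fcancel_def)
  then obtain g' b where r: "r = g' @ [b]" by (cases r rule: rev_cases) auto
  have b: "b = linv a" using fc g r by (cases a; cases b) (auto simp: fcancel_def linv_def)
  have "g' \<noteq> []" using assms(1) fc g r b by (cases a) (auto simp: fcancel_def linv_def)
  moreover have "fg_reduced g'" using assms(1) g r
    by (auto simp: fg_reduced_succ successively_append_iff successively_Cons)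
  ultimately show ?thesis using that g r b by simp
qed



(* ---- B.thy ---- *)

locale plane =
  fixes P :: "(real^3) set" and u1 u2 :: "real^3"
  assumes subP: "subspace P" and u1P: "u1 \<in> P" and u2P: "u2 \<in> P"
    and nu1: "norm u1 = 1" and nu2: "norm u2 = 1" and orth: "u1 \<bullet> u2 = 0"
    and spanP: "span {u1, u2} = P"
begin

definition nn :: "real^3" where "nn = cross3 u1 u2"

lemma u11: "u1 \<bullet> u1 = 1" using nu1 by (simp add: norm_eq_sqrt_inner)
lemma u22: "u2 \<bullet> u2 = 1" using nu2 by (simp add: norm_eq_sqrt_inner)
lemma u21: "u2 \<bullet> u1 = 0" using orth by (simp add: inner_commute)

lemma nn_norm: "norm nn = 1"
proof -
  have "(norm nn)^2 = 1" using norm_cross_dot[of u1 u2] nu1 nu2 orth unfolding nn_def by simp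
  then show ?thesis using norm_ge_zero[of nn] by (smt (verit) power2_eq_1_iff)
qed

lemma nn_nn: "nn \<bullet> nn = 1" using nn_norm by (simp add: norm_eq_sqrt_inner)
lemma nn_u1: "nn \<bullet> u1 = 0" and nn_u2: "nn \<bullet> u2 = 0"
  using dot_cross_self unfolding nn_def by (auto simp: inner_commute)

lemma nn_nz: "nn \<noteq> 0" using nn_norm by auto

lemma P_ortho: "x \<in> P \<Longrightarrow> nn \<bullet> x = 0"
proof -
  assume "x \<in> P"
  then have "x \<in> span {u1, u2}" using spanP by simp
  moreover have "span {u1,u2} \<subseteq> {x. nn \<bullet> x = 0}"
    by (rule span_minimal) (auto simp: nn_u1 nn_u2 subspace_hyperplane)
  ultimately show ?thesis by auto
qed

lemma dimP: "dim P = 2"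
proof -
  have "independent {u1, u2}"
    using orth nu1 nu2 by (intro pairwise_orthogonal_independent) (auto simp: pairwise_def orthogonal_def u21)
  moreover have "u1 \<noteq> u2" using orth u11 by auto
  ultimately have "dim (span {u1,u2}) = 2" by (simp add: dim_eq_card_independent)
  then show ?thesis using spanP by simp
qed

lemma P_eq: "P = {x. nn \<bullet> x = 0}"
proof (rule subspace_dim_equal)
  show "subspace P" by (rule subP)
  show "subspace {x. nn \<bullet> x = 0}" by (rule subspace_hyperplane)
  show "P \<subseteq> {x. nn \<bullet> x = 0}" using P_ortho by auto
  show "dim {x. nn \<bullet> x = 0} \<le> dim P" using dim_hyperplane[OF nn_nz] dimP by simp
qed

lemma inP_iff: "x \<in> P \<longleftrightarrow> nn \<bullet> x = 0" using P_eq by auto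

lemma proj_P: "x - (nn \<bullet> x) *\<^sub>R nn \<in> P"
  by (simp add: inP_iff inner_diff_right nn_nn)

lemma coordP: "x \<in> P \<Longrightarrow> x = (x \<bullet> u1) *\<^sub>R u1 + (x \<bullet> u2) *\<^sub>R u2"
proof -
  assume "x \<in> P"
  define y where "y = x - (x \<bullet> u1) *\<^sub>R u1 - (x \<bullet> u2) *\<^sub>R u2"
  have yP: "y \<in> P" unfolding y_def using \<open>x\<in>P\<close> u1P u2P subP
    by (intro subspace_diff subspace_scale) auto
  have "y \<bullet> u1 = 0" "y \<bullet> u2 = 0" unfolding y_def
    by (auto simp: inner_diff_left u11 u22 u21 orth)
  then have "y \<in> {z. z \<bullet> u1 = 0 \<and> z \<bullet> u2 = 0}" by simp
  moreover have "{u1,u2} \<subseteq> {z. y \<bullet> z = 0}"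
    using \<open>y \<bullet> u1 = 0\<close> \<open>y \<bullet> u2 = 0\<close> by auto
  then have "span {u1,u2} \<subseteq> {z. y \<bullet> z = 0}"
    using span_minimal subspace_hyperplane by blast
  then have "y \<bullet> y = 0" using yP spanP by auto
  then have "y = 0" by simp
  then show ?thesis unfolding y_def by (simp only: diff_diff_eq right_minus_eq)
qed

lemma comb_in_P: "s *\<^sub>R u1 + t *\<^sub>R u2 \<in> P"
  using u1P u2P subP by (intro subspace_add subspace_scale) auto

lemma comb_dot1: "(s *\<^sub>R u1 + t *\<^sub>R u2) \<bullet> u1 = s"
  by (simp add: inner_add_left u11 u21)
lemma comb_dot2: "(s *\<^sub>R u1 + t *\<^sub>R u2) \<bullet> u2 = t"
  by (simp add: inner_add_left u22 orth)

lemma comb_eq_iff: "s *\<^sub>R u1 + t *\<^sub>R u2 = s' *\<^sub>R u1 + t' *\<^sub>R u2 \<longleftrightarrow> s = s' \<and> t = t'"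
  by (metis comb_dot1 comb_dot2)

lemma comb_zero_iff: "s *\<^sub>R u1 + t *\<^sub>R u2 = 0 \<longleftrightarrow> s = 0 \<and> t = 0"
  using comb_eq_iff[of s t 0 0] by simp

lemma cross_comb: "cross3 (a *\<^sub>R u1 + b *\<^sub>R u2) (c *\<^sub>R u1 + d *\<^sub>R u2) = (a*d - b*c) *\<^sub>R nn"
proof -
  have "cross3 u2 u1 = - nn" unfolding nn_def by (metis cross_skew)
  have "cross3 (a *\<^sub>R u1 + b *\<^sub>R u2) (c *\<^sub>R u1 + d *\<^sub>R u2)
     = (a*d) *\<^sub>R cross3 u1 u2 + (b*c) *\<^sub>R cross3 u2 u1"
    by (simp only: cross_add_left cross_add_right cross_mult_left cross_mult_right cross_refl
        scaleR_zero_right add_0_left add_0_right scaleR_scaleR mult.commute[of d a] mult.commute[of c b])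
      (rule add.commute)
  also have "\<dots> = (a*d) *\<^sub>R nn - (b*c) *\<^sub>R nn" using \<open>cross3 u2 u1 = - nn\<close> by (simp add: nn_def)
  also have "\<dots> = (a*d - b*c) *\<^sub>R nn" by (simp add: scaleR_diff_left)
  finally show ?thesis .
qed


definition ca :: "real^3^3 \<Rightarrow> real" where "ca X = (X *v u1) \<bullet> u1"
definition cb :: "real^3^3 \<Rightarrow> real" where "cb X = (X *v u1) \<bullet> u2"
definition cc :: "real^3^3 \<Rightarrow> real" where "cc X = (X *v u2) \<bullet> u1"
definition ce :: "real^3^3 \<Rightarrow> real" where "ce X = (X *v u2) \<bullet> u2"
definition tr :: "real^3^3 \<Rightarrow> real" where "tr X = ca X + ce X"
definition dt :: "real^3^3 \<Rightarrow> real" where "dt X = ca X * ce X - cb X * cc X"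
definition lam :: "real^3^3 \<Rightarrow> real" where "lam X = nn \<bullet> (X *v nn)"
definition pres :: "real^3^3 \<Rightarrow> bool" where "pres X \<longleftrightarrow> (\<forall>x\<in>P. X *v x \<in> P)"

lemma img1: "pres X \<Longrightarrow> X *v u1 = ca X *\<^sub>R u1 + cb X *\<^sub>R u2"
  using coordP[of "X *v u1"] u1P by (simp add: pres_def ca_def cb_def)
lemma img2: "pres X \<Longrightarrow> X *v u2 = cc X *\<^sub>R u1 + ce X *\<^sub>R u2"
  using coordP[of "X *v u2"] u2P by (simp add: pres_def cc_def ce_def)

lemma img_comb: "pres X \<Longrightarrow> X *v (s *\<^sub>R u1 + t *\<^sub>R u2) =
   (s * ca X + t * cc X) *\<^sub>R u1 + (s * cb X + t * ce X) *\<^sub>R u2"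
  by (simp add: matrix_vector_right_distrib matrix_vector_mult_scaleR img1 img2 algebra_simps)

lemma CH: assumes "pres X" "q \<in> P"
  shows "X *v (X *v q) = tr X *\<^sub>R (X *v q) - dt X *\<^sub>R q"
proof -
  define s t where "s = q \<bullet> u1" and "t = q \<bullet> u2"
  have q: "q = s *\<^sub>R u1 + t *\<^sub>R u2" using coordP[OF assms(2)] s_def t_def by simp
  show ?thesis
    unfolding q img_comb[OF assms(1)]
    by (simp add: tr_def dt_def algebra_simps)
qed

lemma detP_eq: assumes "pres X" shows "det_P P X = dt X"
  unfolding det_P_def
proof (rule the_equality)
  show "\<forall>u\<in>P. \<forall>v\<in>P. cross3 (X *v u) (X *v v) = dt X *\<^sub>R cross3 u v"
  proof (intro ballI)
    fix u v assume u: "u \<in> P" and v: "v \<in> P"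
    have gen: "cross3 (X *v (s1 *\<^sub>R u1 + t1 *\<^sub>R u2)) (X *v (s2 *\<^sub>R u1 + t2 *\<^sub>R u2))
       = dt X *\<^sub>R cross3 (s1 *\<^sub>R u1 + t1 *\<^sub>R u2) (s2 *\<^sub>R u1 + t2 *\<^sub>R u2)" for s1 t1 s2 t2
      unfolding img_comb[OF assms] cross_comb scaleR_scaleR
      by (intro arg_cong[where f="\<lambda>r. r *\<^sub>R nn"]) (simp add: dt_def algebra_simps)
    show "cross3 (X *v u) (X *v v) = dt X *\<^sub>R cross3 u v"
      using gen[of "u \<bullet> u1" "u \<bullet> u2" "v \<bullet> u1" "v \<bullet> u2"]
      by (simp add: coordP[OF u, symmetric] coordP[OF v, symmetric])
  qed
next
  fix d assume "\<forall>u\<in>P. \<forall>v\<in>P. cross3 (X *v u) (X *v v) = d *\<^sub>R cross3 u v"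
  then have "cross3 (X *v u1) (X *v u2) = d *\<^sub>R nn" using u1P u2P by (simp add: nn_def)
  moreover have "cross3 (X *v u1) (X *v u2) = dt X *\<^sub>R nn"
    using cross_comb[of "ca X" "cb X" "cc X" "ce X"] by (simp add: img1[OF assms] img2[OF assms] dt_def)
  ultimately show "d = dt X" using nn_nz by (metis scaleR_cancel_right)
qed

lemma det_lam: assumes "pres X" shows "det X = dt X * lam X"
proof -
  have c: "cross3 (X *v u1) (X *v u2) = dt X *\<^sub>R nn"
    using cross_comb[of "ca X" "cb X" "cc X" "ce X"] by (simp add: img1[OF assms] img2[OF assms] dt_def)
  have "transpose X *v cross3 (X *v u1) (X *v u2) = det X *\<^sub>R nn"
    using cross_matrix_mult[of X u1 u2] by (simp add: nn_def)
  then have "dt X *\<^sub>R (transpose X *v nn) = det X *\<^sub>R nn"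
    by (simp add: c matrix_vector_mult_scaleR)
  then have "nn \<bullet> (dt X *\<^sub>R (transpose X *v nn)) = nn \<bullet> (det X *\<^sub>R nn)" by simp
  then have "dt X * (nn \<bullet> (transpose X *v nn)) = det X" by (simp add: nn_nn)
  moreover have "nn \<bullet> (transpose X *v nn) = lam X"
    unfolding lam_def transpose_matrix_vector
    by (simp add: inner_commute[of nn "nn v* X"] dot_lmul_matrix)
  ultimately show ?thesis by simp
qed

lemma Xnn_decomp: "X *v nn - lam X *\<^sub>R nn \<in> P"
  using proj_P[of "X *v nn"] by (simp add: lam_def inner_commute)

lemma eig_P:
  assumes "pres X" "m^2 - tr X * m + dt X = 0"
  shows "\<exists>u. u \<in> P \<and> u \<noteq> 0 \<and> X *v u = m *\<^sub>R u"
proof -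
  define a where "a = ca X"
  define b where "b = cb X"
  define c where "c = cc X"
  define e where "e = ce X"
  have ch: "m^2 - (a+e)*m + (a*e - b*c) = 0" using assms(2) by (simp add: a_def b_def c_def e_def tr_def dt_def)
  have "\<exists>x y. (x \<noteq> 0 \<or> y \<noteq> 0) \<and> x * a + y * c = m * x \<and> x * b + y * e = m * y"
  proof (cases "c = 0")
    case False
    show ?thesis
      by (rule exI[of _ c], rule exI[of _ "m - a"]) (use False ch in \<open>auto simp: algebra_simps power2_eq_square\<close>)
  next
    case c0: True
    show ?thesis
    proof (cases "b = 0")
      case False
      show ?thesis
        by (rule exI[of _ "m - e"], rule exI[of _ b]) (use False c0 ch in \<open>auto simp: algebra_simps power2_eq_square\<close>)
    next
      case b0: True
      have "(m - a) * (m - e) = 0" using ch c0 b0 by (simp add: algebra_simps power2_eq_square)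
      then show ?thesis using c0 b0
        by (cases "m = a") (rule exI[of _ 1], rule exI[of _ 0], simp, rule exI[of _ 0], rule exI[of _ 1], simp)
    qed
  qed
  then obtain x y where xy: "x \<noteq> 0 \<or> y \<noteq> 0" "x * a + y * c = m * x" "x * b + y * e = m * y" by blast
  define u where "u = x *\<^sub>R u1 + y *\<^sub>R u2"
  have "u \<in> P" unfolding u_def by (rule comb_in_P)
  moreover have "u \<noteq> 0" unfolding u_def using xy(1) comb_zero_iff by blast
  moreover have "X *v u = m *\<^sub>R u"
    unfolding u_def img_comb[OF assms(1)] using xy(2,3)
    by (simp add: a_def b_def c_def e_def scaleR_add_right)
  ultimately show ?thesis by blast
qed


end



(* ---- C1.thy ---- *)

definition cond :: "real \<Rightarrow> real \<Rightarrow> bool" where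
  "cond t d \<longleftrightarrow> (d > 0 \<and> t^2 \<le> 4 * d) \<or> (d < 0 \<and> t = 0)"

lemma cond_inv: "cond t d \<Longrightarrow> cond (t / d) (1 / d)"
  by (auto simp: cond_def power_divide divide_simps power2_eq_square)

lemma roots_exist:
  assumes "\<not> cond t d" "d \<noteq> 0"
  shows "\<exists>m1 m2. m1^2 - t*m1 + d = 0 \<and> m2^2 - t*m2 + d = 0 \<and> \<bar>m1\<bar> \<noteq> \<bar>m2\<bar>"
proof -
  define D where "D = t^2 - 4*d"
  have Dp: "D > 0" using assms by (auto simp: cond_def D_def not_le) (smt (verit) power2_less_eq_zero_iff zero_le_power2)
  define r where "r = sqrt D"
  have r2: "r^2 = D" using Dp by (simp add: r_def)
  have rp: "r > 0" using Dp by (simp add: r_def)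
  define m1 where "m1 = (t + r)/2"
  define m2 where "m2 = (t - r)/2"
  have e1: "m1^2 - t*m1 + d = 0" unfolding m1_def using r2 D_def by (simp add: power2_eq_square field_simps)
  have e2: "m2^2 - t*m2 + d = 0" unfolding m2_def using r2 D_def by (simp add: power2_eq_square field_simps)
  have "\<bar>m1\<bar> \<noteq> \<bar>m2\<bar>"
  proof
    assume "\<bar>m1\<bar> = \<bar>m2\<bar>"
    then have "m1 = m2 \<or> m1 = - m2" by (auto simp: abs_eq_iff)
    then show False
    proof
      assume "m1 = m2" then show False using rp by (simp add: m1_def m2_def)
    next
      assume "m1 = - m2" then have "t = 0" unfolding m1_def m2_def by (simp add: field_simps)
      then have "d < 0" using Dp by (simp add: D_def)
      then show False using assms(1) \<open>t = 0\<close> by (simp add: cond_def)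
    qed
  qed
  then show ?thesis using e1 e2 by blast
qed

fun cheb :: "real \<Rightarrow> real \<Rightarrow> nat \<Rightarrow> real" where
  "cheb t d 0 = 0"
| "cheb t d (Suc 0) = 1"
| "cheb t d (Suc (Suc k)) = t * cheb t d (Suc k) - d * cheb t d k"

lemma cheb_Q: "(cheb t d (Suc k))^2 - t * cheb t d (Suc k) * cheb t d k + d * (cheb t d k)^2 = d^k"
proof (induction k)
  case 0 then show ?case by simp
next
  case (Suc k)
  have "(cheb t d (Suc (Suc k)))^2 - t * cheb t d (Suc (Suc k)) * cheb t d (Suc k) + d * (cheb t d (Suc k))^2
     = d * ((cheb t d (Suc k))^2 - t * cheb t d (Suc k) * cheb t d k + d * (cheb t d k)^2)"
    by (simp add: algebra_simps power2_eq_square)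
  then show ?case using Suc by simp
qed

lemma cheb_bound:
  assumes "cond t d" "d \<noteq> 0"
  shows "\<bar>cheb t d (Suc k)\<bar> \<le> real (Suc k) * sqrt \<bar>d\<bar> ^ k"
proof -
  define s where "s = sqrt \<bar>d\<bar>"
  have s0: "s \<ge> 0" by (simp add: s_def)
  have s2: "s^2 = \<bar>d\<bar>" by (simp add: s_def)
  show ?thesis
  proof (cases "d > 0")
    case True
    then have t2: "t^2 \<le> 4 * d" using assms by (auto simp: cond_def)
    have ts: "\<bar>t\<bar> / 2 \<le> s"
    proof -
      have "(\<bar>t\<bar>/2)^2 \<le> s^2" using t2 s2 True by (simp add: power_divide)
      then show ?thesis using s0 by (simp add: abs_le_square_iff power2_le_iff_abs_le)
    qed
    have step: "\<bar>cheb t d (Suc j)\<bar> \<le> s * \<bar>cheb t d j\<bar> + s^j" for j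
    proof -
      have "(cheb t d (Suc j) - t/2 * cheb t d j)^2 + (d - t^2/4) * (cheb t d j)^2 = d^j"
        using cheb_Q[of t d j] by (simp add: algebra_simps power2_eq_square)
      moreover have "(d - t^2/4) * (cheb t d j)^2 \<ge> 0" using t2 by simp
      moreover have "(s^j)^2 = d^j"
      proof -
        have "(s^j)^2 = (s^2)^j" by (metis power_mult mult.commute)
        then show ?thesis using s2 True by simp
      qed
      ultimately have "(cheb t d (Suc j) - t/2 * cheb t d j)^2 \<le> (s^j)^2" by linarith
      then have "\<bar>cheb t d (Suc j) - t/2 * cheb t d j\<bar> \<le> s^j" using s0
        by (simp add: abs_le_square_iff power2_le_iff_abs_le)
      moreover have "\<bar>t/2 * cheb t d j\<bar> \<le> s * \<bar>cheb t d j\<bar>"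
      proof -
        have "\<bar>t/2 * cheb t d j\<bar> = (\<bar>t\<bar>/2) * \<bar>cheb t d j\<bar>" by (simp add: abs_mult)
        also have "\<dots> \<le> s * \<bar>cheb t d j\<bar>" using ts by (rule mult_right_mono) simp
        finally show ?thesis .
      qed
      ultimately show ?thesis by linarith
    qed
    show ?thesis unfolding s_def[symmetric]
    proof (induction k)
      case 0 then show ?case by simp
    next
      case (Suc k)
      have "\<bar>cheb t d (Suc (Suc k))\<bar> \<le> s * \<bar>cheb t d (Suc k)\<bar> + s^Suc k" by (rule step)
      also have "\<dots> \<le> s * (real (Suc k) * s^k) + s^Suc k"
        using Suc s0 by (simp add: mult_left_mono)
      also have "\<dots> = real (Suc (Suc k)) * s ^ Suc k" by (simp add: algebra_simps)
      finally show ?case .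
    qed
  next
    case False
    then have d: "d < 0" "t = 0" using assms by (auto simp: cond_def)
    have "\<bar>cheb t d (Suc j)\<bar> \<le> s^j \<and> \<bar>cheb t d (Suc (Suc j))\<bar> \<le> s^(Suc j)" for j
    proof (induction j)
      case 0 then show ?case using d s0 by simp
    next
      case (Suc j)
      have "cheb t d (Suc (Suc (Suc j))) = - d * cheb t d (Suc j)" using d by simp
      then have "\<bar>cheb t d (Suc (Suc (Suc j)))\<bar> = s^2 * \<bar>cheb t d (Suc j)\<bar>"
        using s2 d by (simp add: abs_mult)
      also have "\<dots> \<le> s^2 * s^j" using Suc s0 by (simp add: mult_left_mono)
      finally show ?case using Suc by (simp add: power_add[symmetric] algebra_simps)
    qed
    then have "\<bar>cheb t d (Suc k)\<bar> \<le> s^k" by blast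
    also have "\<dots> \<le> real (Suc k) * s^k" using s0 by (simp add: algebra_simps)
    finally show ?thesis by (simp add: s_def)
  qed
qed



(* ---- C2.thy ---- *)
lemma cheb_iter:
  fixes X :: "real^3^3" and P :: "(real^3) set"
  assumes ch: "\<And>q. q \<in> P \<Longrightarrow> X *v (X *v q) = t *\<^sub>R (X *v q) - d *\<^sub>R q" and q: "q \<in> P"
  shows "((*v) X ^^ Suc k) q = cheb t d (Suc k) *\<^sub>R (X *v q) - (d * cheb t d k) *\<^sub>R q"
proof (induction k)
  case 0 then show ?case by simp
next
  case (Suc k)
  have "((*v) X ^^ Suc (Suc k)) q = X *v (((*v) X ^^ Suc k) q)" by simp
  also have "\<dots> = cheb t d (Suc k) *\<^sub>R (X *v (X *v q)) - (d * cheb t d k) *\<^sub>R (X *v q)"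
    unfolding Suc.IH by (simp only: matrix_vector_mult_diff_distrib matrix_vector_mult_scaleR)
  also have "\<dots> = cheb t d (Suc (Suc k)) *\<^sub>R (X *v q) - (d * cheb t d (Suc k)) *\<^sub>R q"
    unfolding ch[OF q] by (simp add: algebra_simps)
  finally show ?case .
qed

lemma pow_bound:
  fixes X :: "real^3^3" and P :: "(real^3) set"
  assumes ch: "\<And>q. q \<in> P \<Longrightarrow> X *v (X *v q) = t *\<^sub>R (X *v q) - d *\<^sub>R q"
    and cd: "cond t d" and d0: "d \<noteq> 0"
  shows "\<exists>K>0. \<forall>k. \<forall>q\<in>P. norm (((*v) X ^^ k) q) \<le> K * real (k+1) * sqrt \<bar>d\<bar> ^ k * norm q"
proof -
  define s where "s = sqrt \<bar>d\<bar>"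
  have sp: "s > 0" using d0 by (simp add: s_def)
  have s2: "s^2 = \<bar>d\<bar>" by (simp add: s_def)
  define B where "B = onorm ((*v) X)"
  have B0: "B \<ge> 0" unfolding B_def by (simp add: onorm_pos_le matrix_vector_mul_bounded_linear)
  have Bx: "norm (X *v x) \<le> B * norm x" for x
    unfolding B_def by (rule onorm[OF matrix_vector_mul_bounded_linear])
  define K where "K = B / s + 1"
  have K1: "K \<ge> 1" using B0 sp by (simp add: K_def)
  have "norm (((*v) X ^^ k) q) \<le> K * real (k+1) * s ^ k * norm q" if q: "q \<in> P" for k q
  proof (cases k)
    case 0 then show ?thesis using K1 by (simp add: mult_le_cancel_right1)
  next
    case (Suc j)
    have cb1: "\<bar>cheb t d (Suc j)\<bar> \<le> real (Suc j) * s^j" using cheb_bound[OF cd d0] by (simp add: s_def)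
    have cb0: "\<bar>d\<bar> * \<bar>cheb t d j\<bar> \<le> real j * s^(Suc j)"
    proof (cases j)
      case 0 then show ?thesis by simp
    next
      case (Suc i)
      have "\<bar>cheb t d j\<bar> \<le> real j * s^i" using cheb_bound[OF cd d0, of i] Suc by (simp add: s_def)
      then have "\<bar>d\<bar> * \<bar>cheb t d j\<bar> \<le> s^2 * (real j * s^i)" using s2 by (simp add: mult_left_mono)
      then show ?thesis using Suc by (simp add: algebra_simps power2_eq_square)
    qed
    have "norm (((*v) X ^^ k) q) = norm (cheb t d (Suc j) *\<^sub>R (X *v q) - (d * cheb t d j) *\<^sub>R q)"
      using cheb_iter[OF ch q, of j] Suc by simp
    also have "\<dots> \<le> \<bar>cheb t d (Suc j)\<bar> * norm (X *v q) + (\<bar>d\<bar> * \<bar>cheb t d j\<bar>) * norm q"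
      by (rule order_trans[OF norm_triangle_ineq4]) (simp add: abs_mult)
    also have "\<dots> \<le> (real (Suc j) * s^j) * (B * norm q) + (real j * s^(Suc j)) * norm q"
    proof (rule add_mono)
      show "\<bar>cheb t d (Suc j)\<bar> * norm (X *v q) \<le> (real (Suc j) * s^j) * (B * norm q)"
        by (rule mult_mono[OF cb1 Bx]) (use sp in auto)
      show "(\<bar>d\<bar> * \<bar>cheb t d j\<bar>) * norm q \<le> (real j * s^(Suc j)) * norm q"
        by (rule mult_right_mono[OF cb0]) simp
    qed
    also have "\<dots> = s^(Suc j) * norm q * (real (Suc j) * (B / s) + real j)"
      using sp by (simp add: field_simps)
    also have "\<dots> \<le> s^(Suc j) * norm q * (K * real (Suc j + 1))"
    proof (rule mult_left_mono)
      have bs: "B / s \<ge> 0" using B0 sp by simp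
      have "K * real (Suc j + 1) = real (Suc j) * (B / s) + B / s + real j + 2"
        unfolding K_def by (simp add: algebra_simps)
      then show "real (Suc j) * (B / s) + real j \<le> K * real (Suc j + 1)" using bs by linarith
    qed (use sp in simp)
    finally show ?thesis using Suc by (simp add: algebra_simps)
  qed
  then show ?thesis using K1 unfolding s_def by (intro exI[of _ K]) auto
qed



(* ---- D.thy ---- *)

lemma lin_pow: "linear (((*v) (X::real^3^3)) ^^ k)"
proof (induction k)
  case 0 then show ?case using linear_id by (simp add: id_def)
next
  case (Suc k)
  have "((*v) X ^^ Suc k) = (*v) X \<circ> ((*v) X ^^ k)" by simp
  then show ?case using linear_compose[OF Suc.IH matrix_vector_mul_linear[of X]] by (simp add: o_def)
qed

lemma pow_add: "(((*v) (X::real^3^3)) ^^ k) (a + b) = (((*v) X) ^^ k) a + (((*v) X) ^^ k) b"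
  using linear_add[OF lin_pow] .
lemma pow_scale: "(((*v) (X::real^3^3)) ^^ k) (c *\<^sub>R a) = c *\<^sub>R (((*v) X) ^^ k) a"
  using linear_cmul[OF lin_pow] .
lemma pow_diff: "(((*v) (X::real^3^3)) ^^ k) (a - b) = (((*v) X) ^^ k) a - (((*v) X) ^^ k) b"
  using linear_diff[OF lin_pow] .

context plane begin

lemma pow_pres: "pres X \<Longrightarrow> q \<in> P \<Longrightarrow> (((*v) X) ^^ k) q \<in> P"
  by (induction k) (auto simp: pres_def)

lemma nonhyp_cond:
  assumes "pres X" "dt X \<noteq> 0" "\<sigma> \<noteq> 0" "\<not> hyperbolic_on P (\<lambda>x. \<sigma> *\<^sub>R (X *v x))"
  shows "cond (tr X) (dt X)"
proof (rule ccontr)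
  assume "\<not> cond (tr X) (dt X)"
  then obtain m1 m2 where m: "m1^2 - tr X*m1 + dt X = 0" "m2^2 - tr X*m2 + dt X = 0" "\<bar>m1\<bar> \<noteq> \<bar>m2\<bar>"
    using roots_exist assms(2) by blast
  obtain v1 where v1: "v1 \<in> P" "v1 \<noteq> 0" "X *v v1 = m1 *\<^sub>R v1" using eig_P[OF assms(1) m(1)] by blast
  obtain v2 where v2: "v2 \<in> P" "v2 \<noteq> 0" "X *v v2 = m2 *\<^sub>R v2" using eig_P[OF assms(1) m(2)] by blast
  have "hyperbolic_on P (\<lambda>x. \<sigma> *\<^sub>R (X *v x))"
    unfolding hyperbolic_on_def
    apply (rule exI[of _ "\<sigma> * m1"], rule exI[of _ "\<sigma> * m2"], rule exI[of _ v1], rule exI[of _ v2])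
    using v1 v2 m(3) assms(3) by (simp add: abs_mult)
  then show False using assms(4) by blast
qed

lemma inv_rel:
  assumes "pres X" "pres Y" "\<And>x. X *v (Y *v x) = x"
  shows "dt X * dt Y = 1" "tr Y = tr X / dt X"
proof -
  have "X *v (Y *v u1) = 1 *\<^sub>R u1 + 0 *\<^sub>R u2" using assms(3) by simp
  then have e1: "ca Y * ca X + cb Y * cc X = 1" "ca Y * cb X + cb Y * ce X = 0"
    unfolding img1[OF assms(2)] img_comb[OF assms(1)] comb_eq_iff by auto
  have "X *v (Y *v u2) = 0 *\<^sub>R u1 + 1 *\<^sub>R u2" using assms(3) by simp
  then have e2: "cc Y * ca X + ce Y * cc X = 0" "cc Y * cb X + ce Y * ce X = 1"
    unfolding img2[OF assms(2)] img_comb[OF assms(1)] comb_eq_iff by auto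
  have "dt X * dt Y = (ca Y * ca X + cb Y * cc X) * (cc Y * cb X + ce Y * ce X)
      - (cc Y * ca X + ce Y * cc X) * (ca Y * cb X + cb Y * ce X)"
    unfolding dt_def by (simp add: algebra_simps)
  then show dd: "dt X * dt Y = 1" using e1 e2 by simp
  have a: "ca Y * dt X = ce X"
  proof -
    have "ca Y * dt X = ce X * (ca Y * ca X + cb Y * cc X) - cc X * (ca Y * cb X + cb Y * ce X)"
      unfolding dt_def by (simp add: algebra_simps)
    then show ?thesis using e1 by simp
  qed
  have e: "ce Y * dt X = ca X"
  proof -
    have "ce Y * dt X = ca X * (cc Y * cb X + ce Y * ce X) - cb X * (cc Y * ca X + ce Y * cc X)"
      unfolding dt_def by (simp add: algebra_simps)
    then show ?thesis using e2 by simp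
  qed
  have "dt X \<noteq> 0" using dd by auto
  then show "tr Y = tr X / dt X" using a e unfolding tr_def by (simp add: field_simps)
qed

lemma drift:
  assumes pr: "pres X" and bX: "\<forall>k. \<forall>q\<in>P. norm ((((*v) X) ^^ k) q) \<le> K * real (k+1) * a ^ k * norm q"
    and K: "K \<ge> 0" and a: "0 \<le> a" "a \<le> b" and b: "1 \<le> b" and l: "\<bar>lam X\<bar> \<le> b"
  shows "(((*v) X) ^^ k) nn - lam X ^ k *\<^sub>R nn \<in> P \<and>
         norm ((((*v) X) ^^ k) nn - lam X ^ k *\<^sub>R nn) \<le> K * norm (X *v nn - lam X *\<^sub>R nn) * real k ^ 2 * b ^ k"
proof (induction k)
  case 0 then show ?case by (simp add: subspace_0[OF subP])
next
  case (Suc k)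
  define p where "p = X *v nn - lam X *\<^sub>R nn"
  have pP: "p \<in> P" unfolding p_def by (rule Xnn_decomp)
  define w where "w = (((*v) X) ^^ k) nn - lam X ^ k *\<^sub>R nn"
  have wP: "w \<in> P" and wb: "norm w \<le> K * norm p * real k ^ 2 * b ^ k" using Suc by (auto simp: w_def p_def)
  have eq: "(((*v) X) ^^ Suc k) nn - lam X ^ Suc k *\<^sub>R nn = (((*v) X) ^^ k) p + lam X *\<^sub>R w"
  proof -
    have "(((*v) X) ^^ Suc k) nn = (((*v) X) ^^ k) (X *v nn)" by (simp add: funpow_Suc_right del: funpow.simps)
    also have "X *v nn = p + lam X *\<^sub>R nn" by (simp add: p_def)
    finally show ?thesis by (simp add: pow_add pow_scale w_def algebra_simps)
  qed
  have A: "(((*v) X) ^^ k) p + lam X *\<^sub>R w \<in> P"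
    using pow_pres[OF pr pP, of k] wP subP by (intro subspace_add subspace_scale) auto
  have B: "norm ((((*v) X) ^^ k) p + lam X *\<^sub>R w) \<le> K * norm p * real (Suc k) ^ 2 * b ^ Suc k"
  proof -
    have bk: "a^k \<le> b^k" using a by (simp add: power_mono)
    have bk1: "b^k \<le> b^Suc k" using b by simp
    have "norm ((((*v) X) ^^ k) p + lam X *\<^sub>R w) \<le> norm ((((*v) X) ^^ k) p) + \<bar>lam X\<bar> * norm w"
      by (rule order_trans[OF norm_triangle_ineq]) simp
    also have "\<dots> \<le> K * real (k+1) * a ^ k * norm p + b * (K * norm p * real k ^ 2 * b ^ k)"
      using bX pP wb l by (intro add_mono mult_mono) auto
    also have "\<dots> \<le> K * real (k+1) * b ^ Suc k * norm p + (K * norm p * real k ^ 2 * b ^ Suc k)"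
    proof -
      have "a ^ k \<le> b ^ Suc k" using bk bk1 by linarith
      then have "K * real (k+1) * a ^ k * norm p \<le> K * real (k+1) * b ^ Suc k * norm p"
        using K by (intro mult_right_mono mult_left_mono) auto
      then show ?thesis by simp
    qed
    also have "\<dots> \<le> K * norm p * real (Suc k) ^ 2 * b ^ Suc k"
    proof -
      have "real (k+1) + real k ^ 2 \<le> real (Suc k) ^ 2" by (simp add: power2_eq_square algebra_simps)
      then have "(K * norm p * b ^ Suc k) * (real (k+1) + real k ^ 2) \<le> (K * norm p * b ^ Suc k) * real (Suc k) ^ 2"
        using K b by (intro mult_left_mono) auto
      then show ?thesis by (simp add: algebra_simps)
    qed
    finally show ?thesis .
  qed
  show ?case unfolding eq p_def[symmetric] using A B by blast
qed


lemma decomp_x: "x = (x - (nn \<bullet> x) *\<^sub>R nn) + (nn \<bullet> x) *\<^sub>R nn" by simp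

lemma beta_le: "\<bar>nn \<bullet> x\<bar> \<le> norm x"
  using Cauchy_Schwarz_ineq2[of nn x] nn_norm by simp

lemma qx_le: "norm (x - (nn \<bullet> x) *\<^sub>R nn) \<le> 2 * norm x"
proof -
  have "norm (x - (nn \<bullet> x) *\<^sub>R nn) \<le> norm x + \<bar>nn \<bullet> x\<bar> * norm nn" by (rule order_trans[OF norm_triangle_ineq4]) simp
  then show ?thesis using beta_le[of x] nn_norm by simp
qed

lemma conj_bound:
  fixes M N Dm :: "real^3^3"
  assumes pM: "pres M" and pN: "pres N" and pD: "pres Dm" and T: "T \<ge> 1" and K: "K \<ge> 0"
    and bM: "\<forall>k. \<forall>q\<in>P. norm ((((*v) M) ^^ k) q) \<le> K * real (k+1) * (1/T) ^ k * norm q"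
    and bN: "\<forall>k. \<forall>q\<in>P. norm ((((*v) N) ^^ k) q) \<le> K * real (k+1) * T ^ k * norm q"
    and lM: "\<bar>lam M\<bar> = T^2" and lN: "\<bar>lam N\<bar> = 1 / T^2"
  shows "\<exists>C. \<forall>k x. norm ((((*v) M) ^^ k) (Dm *v ((((*v) N) ^^ k) x))) \<le> C * real (k+1) ^ 3 * norm x"
proof -
  have T0: "T > 0" using T by simp
  define pMv where "pMv = M *v nn - lam M *\<^sub>R nn"
  define pNv where "pNv = N *v nn - lam N *\<^sub>R nn"
  define \<nu> where "\<nu> = lam Dm"
  define pDv where "pDv = Dm *v nn - \<nu> *\<^sub>R nn"
  have pDP: "pDv \<in> P" unfolding pDv_def \<nu>_def by (rule Xnn_decomp)
  define BD where "BD = onorm ((*v) Dm)"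
  have BD0: "BD \<ge> 0" unfolding BD_def by (simp add: onorm_pos_le matrix_vector_mul_bounded_linear)
  have BDx: "norm (Dm *v x) \<le> BD * norm x" for x
    unfolding BD_def by (rule onorm[OF matrix_vector_mul_bounded_linear])
  define A1 where "A1 = 2 * K + K * norm pNv"
  define A2 where "A2 = BD * A1 + norm pDv"
  define C where "C = K * A2 + \<bar>\<nu>\<bar> * K * norm pMv + \<bar>\<nu>\<bar>"
  have A10: "A1 \<ge> 0" using K by (simp add: A1_def)
  have A20: "A2 \<ge> 0" using BD0 A10 by (simp add: A2_def)
  have "norm ((((*v) M) ^^ k) (Dm *v ((((*v) N) ^^ k) x))) \<le> C * real (k+1) ^ 3 * norm x" for k x
  proof -
    have dM: "(((*v) M) ^^ k) nn - lam M ^ k *\<^sub>R nn \<in> P \<and>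
         norm ((((*v) M) ^^ k) nn - lam M ^ k *\<^sub>R nn) \<le> K * norm pMv * real k ^ 2 * (T^2) ^ k"
      unfolding pMv_def
    proof (rule drift[OF pM bM K])
      show "0 \<le> 1/T" using T0 by simp
      show "1/T \<le> T^2" using T by (smt (verit) divide_le_eq_1_pos one_le_power T0)
      show "1 \<le> T^2" using T by simp
    qed (use lM in simp)
    have dN: "(((*v) N) ^^ k) nn - lam N ^ k *\<^sub>R nn \<in> P \<and>
         norm ((((*v) N) ^^ k) nn - lam N ^ k *\<^sub>R nn) \<le> K * norm pNv * real k ^ 2 * T ^ k"
      unfolding pNv_def
    proof (rule drift[OF pN bN K])
      show "\<bar>lam N\<bar> \<le> T" using lN T by (smt (verit) divide_le_eq_1_pos one_le_power T0 zero_less_power)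
    qed (use T in auto)
    define wM where "wM = (((*v) M) ^^ k) nn - lam M ^ k *\<^sub>R nn"
    define wN where "wN = (((*v) N) ^^ k) nn - lam N ^ k *\<^sub>R nn"
    define \<beta> where "\<beta> = nn \<bullet> x"
    define qx where "qx = x - \<beta> *\<^sub>R nn"
    define \<mu> where "\<mu> = lam N"
    define lm where "lm = lam M"
    have qxP: "qx \<in> P" unfolding qx_def \<beta>_def by (rule proj_P)
    have bx: "\<bar>\<beta>\<bar> \<le> norm x" unfolding \<beta>_def by (rule beta_le)
    have qxn: "norm qx \<le> 2 * norm x" unfolding qx_def \<beta>_def by (rule qx_le)
    have kk: "real k ^ 2 \<le> real (k+1) ^ 2" "real (k+1) \<le> real (k+1) ^ 2" "real (k+1)^2 \<le> real (k+1)^3"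
      "(1::real) \<le> real (k+1)^3" "real k ^ 2 \<le> real (k+1) ^ 3"
    proof -
      have r1: "1 \<le> real (k+1)" by simp
      show "real k ^ 2 \<le> real (k+1) ^ 2" by (rule power_mono) auto
      show "real (k+1) \<le> real (k+1) ^ 2" using power_increasing[OF _ r1, of 1 2] by simp
      show c: "real (k+1)^2 \<le> real (k+1)^3" using power_increasing[OF _ r1, of 2 3] by simp
      show "(1::real) \<le> real (k+1)^3" using one_le_power[OF r1] by blast
      have "real k ^ 2 \<le> real (k+1) ^ 2" by (rule power_mono) auto
      then show "real k ^ 2 \<le> real (k+1) ^ 3" using c by linarith
    qed
    \<comment> \<open>N part\<close>
    define y1 where "y1 = (((*v) N) ^^ k) qx + \<beta> *\<^sub>R wN"
    have Nx: "(((*v) N) ^^ k) x = y1 + (\<beta> * \<mu> ^ k) *\<^sub>R nn"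
    proof -
      have "(((*v) N) ^^ k) x = (((*v) N) ^^ k) qx + \<beta> *\<^sub>R (((*v) N) ^^ k) nn"
        unfolding qx_def by (simp add: pow_diff pow_scale)
      then show ?thesis by (simp add: y1_def wN_def \<mu>_def algebra_simps)
    qed
    have y1P: "y1 \<in> P" unfolding y1_def using pow_pres[OF pN qxP] dN subP
      by (intro subspace_add subspace_scale) (auto simp: wN_def)
    have y1n: "norm y1 \<le> A1 * real (k+1)^2 * T^k * norm x"
    proof -
      have "norm y1 \<le> norm ((((*v) N) ^^ k) qx) + \<bar>\<beta>\<bar> * norm wN"
        unfolding y1_def by (rule order_trans[OF norm_triangle_ineq]) simp
      also have "\<dots> \<le> K * real (k+1) * T ^ k * (2 * norm x) + norm x * (K * norm pNv * real k ^ 2 * T ^ k)"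
        using bN qxP qxn dN bx K T0
        by (intro add_mono mult_mono order_trans[OF _ mult_left_mono[OF qxn]]) (auto simp: wN_def)
      also have "\<dots> \<le> (2 * K) * real (k+1)^2 * T^k * norm x + (K * norm pNv) * real (k+1)^2 * T ^ k * norm x"
      proof (rule add_mono)
        have "(2 * K * T^k * norm x) * real (k+1) \<le> (2 * K * T^k * norm x) * real (k+1)^2"
          using kk K T0 by (intro mult_left_mono) auto
        then show "K * real (k+1) * T ^ k * (2 * norm x) \<le> (2 * K) * real (k+1)^2 * T^k * norm x"
          by (simp add: algebra_simps)
        have "(K * norm pNv * T^k * norm x) * real k ^ 2 \<le> (K * norm pNv * T^k * norm x) * real (k+1)^2"
          using kk K T0 by (intro mult_left_mono) auto
        then show "norm x * (K * norm pNv * real k ^ 2 * T ^ k) \<le> (K * norm pNv) * real (k+1)^2 * T ^ k * norm x"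
          by (simp add: algebra_simps)
      qed
      also have "\<dots> = A1 * real (k+1)^2 * T^k * norm x" by (simp add: A1_def algebra_simps)
      finally show ?thesis .
    qed
    \<comment> \<open>D part\<close>
    define z1 where "z1 = Dm *v y1 + (\<beta> * \<mu> ^ k) *\<^sub>R pDv"
    have DNx: "Dm *v ((((*v) N) ^^ k) x) = z1 + (\<beta> * \<mu> ^ k * \<nu>) *\<^sub>R nn"
      unfolding Nx z1_def pDv_def by (simp add: matrix_vector_right_distrib matrix_vector_mult_scaleR algebra_simps)
    have z1P: "z1 \<in> P" unfolding z1_def using pD y1P pDP subP
      by (intro subspace_add subspace_scale) (auto simp: pres_def)
    have muk: "\<bar>\<mu>\<bar> ^ k * (T^2)^k = 1" using lN T0 by (simp add: \<mu>_def power_mult_distrib[symmetric])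
    have muk1: "\<bar>\<mu>\<bar> ^ k \<le> 1" using lN T by (simp add: \<mu>_def power_le_one)
    have Tk: "1 \<le> T^k" using T by simp
    have z1n: "norm z1 \<le> A2 * real (k+1)^2 * T^k * norm x"
    proof -
      have "norm z1 \<le> norm (Dm *v y1) + (\<bar>\<beta>\<bar> * \<bar>\<mu>\<bar> ^ k) * norm pDv"
        unfolding z1_def by (rule order_trans[OF norm_triangle_ineq]) (simp add: abs_mult power_abs)
      also have "\<dots> \<le> BD * (A1 * real (k+1)^2 * T^k * norm x) + (norm x * 1) * norm pDv"
      proof (rule add_mono)
        show "norm (Dm *v y1) \<le> BD * (A1 * real (k+1)^2 * T^k * norm x)"
          using BDx[of y1] mult_left_mono[OF y1n BD0] by linarith
        show "(\<bar>\<beta>\<bar> * \<bar>\<mu>\<bar> ^ k) * norm pDv \<le> (norm x * 1) * norm pDv"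
          using bx muk1 by (intro mult_right_mono mult_mono) auto
      qed
      also have "\<dots> \<le> BD * (A1 * real (k+1)^2 * T^k * norm x) + (real (k+1)^2 * T^k * norm x) * norm pDv"
      proof -
        have k1: "1 \<le> real (k+1)^2" using kk(2) by simp
        have "1 \<le> real (k+1)^2 * T^k" using mult_mono[OF k1 Tk] by simp
        then show ?thesis by (intro add_mono order_refl mult_right_mono) (auto simp: mult_le_cancel_right1)
      qed
      also have "\<dots> = A2 * real (k+1)^2 * T^k * norm x" by (simp add: A2_def algebra_simps)
      finally show ?thesis .
    qed
    \<comment> \<open>M part\<close>
    have Mx: "(((*v) M) ^^ k) (Dm *v ((((*v) N) ^^ k) x))
       = (((*v) M) ^^ k) z1 + (\<beta> * \<mu> ^ k * \<nu>) *\<^sub>R wM + (\<beta> * \<mu> ^ k * \<nu> * lm ^ k) *\<^sub>R nn"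
      unfolding DNx by (simp add: pow_add pow_scale wM_def lm_def algebra_simps)
    have t1: "norm ((((*v) M) ^^ k) z1) \<le> (K * A2) * real (k+1)^3 * norm x"
    proof -
      have "norm ((((*v) M) ^^ k) z1) \<le> K * real (k+1) * (1/T) ^ k * norm z1" using bM z1P by blast
      also have "\<dots> \<le> K * real (k+1) * (1/T) ^ k * (A2 * real (k+1)^2 * T^k * norm x)"
        using z1n K T0 by (intro mult_left_mono) auto
      also have "\<dots> = (K * A2) * real (k+1)^3 * norm x * ((1/T)^k * T^k)"
        by (simp add: algebra_simps power3_eq_cube power2_eq_square)
      also have "(1/T)^k * T^k = 1" using T0 by (simp add: power_mult_distrib[symmetric])
      finally show ?thesis by simp
    qed
    have t2: "norm ((\<beta> * \<mu> ^ k * \<nu>) *\<^sub>R wM) \<le> (\<bar>\<nu>\<bar> * K * norm pMv) * real (k+1)^3 * norm x"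
    proof -
      have "norm ((\<beta> * \<mu> ^ k * \<nu>) *\<^sub>R wM) = \<bar>\<beta>\<bar> * \<bar>\<nu>\<bar> * (\<bar>\<mu>\<bar> ^ k * norm wM)"
        by (simp add: abs_mult power_abs)
      also have "\<bar>\<mu>\<bar> ^ k * norm wM \<le> \<bar>\<mu>\<bar> ^ k * (K * norm pMv * real k ^ 2 * (T^2) ^ k)"
        using dM by (intro mult_left_mono) (auto simp: wM_def)
      also have "\<dots> = K * norm pMv * real k ^ 2" using muk by (simp add: algebra_simps)
      finally have "norm ((\<beta> * \<mu> ^ k * \<nu>) *\<^sub>R wM) \<le> \<bar>\<beta>\<bar> * \<bar>\<nu>\<bar> * (K * norm pMv * real k ^ 2)"
        by (simp add: mult_left_mono)
      also have "\<dots> \<le> norm x * \<bar>\<nu>\<bar> * (K * norm pMv * real (k+1) ^ 3)"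
        using bx kk K by (intro mult_mono) (auto intro!: mult_left_mono)
      finally show ?thesis by (simp add: algebra_simps)
    qed
    have t3: "norm ((\<beta> * \<mu> ^ k * \<nu> * lm ^ k) *\<^sub>R nn) \<le> \<bar>\<nu>\<bar> * real (k+1)^3 * norm x"
    proof -
      have "\<bar>\<mu>\<bar>^k * \<bar>lm\<bar>^k = 1" using muk lM by (simp add: lm_def)
      then have "norm ((\<beta> * \<mu> ^ k * \<nu> * lm ^ k) *\<^sub>R nn) = \<bar>\<beta>\<bar> * \<bar>\<nu>\<bar>"
        using nn_norm by (simp add: abs_mult power_abs)
      also have "\<dots> \<le> norm x * \<bar>\<nu>\<bar> * real (k+1)^3"
      proof -
        have "\<bar>\<beta>\<bar> * \<bar>\<nu>\<bar> \<le> norm x * \<bar>\<nu>\<bar>" using bx by (rule mult_right_mono) simp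
        also have "\<dots> \<le> (norm x * \<bar>\<nu>\<bar>) * real (k+1)^3"
          using mult_left_mono[OF kk(4), of "norm x * \<bar>\<nu>\<bar>"] by simp
        finally show ?thesis .
      qed
      finally show ?thesis by (simp add: algebra_simps)
    qed
    have "norm ((((*v) M) ^^ k) (Dm *v ((((*v) N) ^^ k) x))) \<le>
       norm ((((*v) M) ^^ k) z1) + norm ((\<beta> * \<mu> ^ k * \<nu>) *\<^sub>R wM) + norm ((\<beta> * \<mu> ^ k * \<nu> * lm ^ k) *\<^sub>R nn)"
      unfolding Mx by (meson norm_triangle_le norm_triangle_ineq add_mono order_refl)
    also have "\<dots> \<le> C * real (k+1) ^ 3 * norm x" using t1 t2 t3 by (simp add: C_def algebra_simps)
    finally show ?thesis .
  qed
  then show ?thesis by blast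
qed

end


(* ---- E.thy ---- *)

lemma ln_le_2sqrt: "x > 0 \<Longrightarrow> ln x \<le> 2 * sqrt x"
proof -
  assume x: "x > 0"
  have "ln (sqrt x) \<le> sqrt x - 1" using x by (intro ln_le_minus_one) simp
  then show ?thesis using x by (simp add: ln_sqrt)
qed

lemma growth_contra:
  fixes \<alpha> C b :: real
  assumes a: "\<alpha> > 0" and C: "C > 0" and h: "\<forall>k::nat. \<alpha> * (2 * real k + 1) - b \<le> ln (C * real (k+1) ^ 3)"
  shows False
proof -
  define E where "E = \<alpha> + \<bar>b\<bar> + \<bar>ln C\<bar>"
  define n :: nat where "n = nat \<lceil>(6 + E) / \<alpha>\<rceil> + 1"
  have n1: "n \<ge> 1" by (simp add: n_def)
  have an: "\<alpha> * real n \<ge> 6 + E"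
  proof -
    have "real n \<ge> (6 + E) / \<alpha>" unfolding n_def by linarith
    then show ?thesis using a by (simp add: field_simps)
  qed
  define k where "k = n^2 - 1"
  have k1: "real (k+1) = real n ^ 2" using n1 by (simp add: k_def)
  have "ln (C * real (k+1) ^ 3) = ln C + 3 * ln (real (k+1))" using C n1 k1
    by (simp add: ln_mult ln_realpow)
  also have "ln (real (k+1)) \<le> 2 * sqrt (real (k+1))" by (rule ln_le_2sqrt) simp
  also have "sqrt (real (k+1)) = real n" using k1 by simp
  finally have u: "ln (C * real (k+1) ^ 3) \<le> ln C + 6 * real n" by simp
  have "2 * real k + 1 = 2 * real n ^ 2 - 1" using k1 by simp
  then have e1: "\<alpha> * (2 * real k + 1) = \<alpha> * (2 * real n ^ 2 - 1)" by simp
  have e2: "\<alpha> * (2 * real n ^ 2 - 1) = 2 * (\<alpha> * real n) * real n - \<alpha>"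
    by (simp add: algebra_simps power2_eq_square)
  have "2 * (\<alpha> * real n) * real n \<ge> 2 * (6 + E) * real n" using an n1 by (intro mult_right_mono) auto
  then have "2 * (\<alpha> * real n) * real n - \<alpha> - b > ln C + 6 * real n"
  proof -
    have E0: "E \<ge> 0" using a unfolding E_def by simp
    have "E * real n \<ge> E" using n1 E0 by (metis mult_le_cancel_left1 of_nat_1 of_nat_le_iff order_less_le_trans not_le)
    moreover have "E \<ge> \<alpha> + b + ln C" unfolding E_def by linarith
    moreover have "real n \<ge> 1" using n1 by simp
    moreover have "2 * (6 + E) * real n = 12 * real n + 2 * (E * real n)" by (simp add: algebra_simps)
    ultimately show ?thesis using \<open>2 * (\<alpha> * real n) * real n \<ge> 2 * (6 + E) * real n\<close>
      using E0 by linarith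
  qed
  then show False using h[rule_format, of k] u e1 e2 by linarith
qed

lemma sum_len_le: "(\<forall>w\<in>set ws. length w \<le> L) \<Longrightarrow> sum_list (map length ws) \<le> length ws * L"
  by (induction ws) auto

lemma word_length_bound:
  assumes g: "fin_sym_gen_set S" and gc: "g \<in> fg_carrier"
  shows "real (length g) \<le> real (Max (insert 1 (length ` S))) * real (word_length S g)"
proof -
  have ex: "\<exists>ws. length ws = n \<and> set ws \<subseteq> S \<and> fg_prod ws = g" if "n = length ws0" "set ws0 \<subseteq> S" "fg_prod ws0 = g" for n ws0
    using that by blast
  obtain ws0 where "set ws0 \<subseteq> S" "fg_prod ws0 = g" using g gc by (auto simp: fin_sym_gen_set_def)
  then have "\<exists>n ws. length ws = n \<and> set ws \<subseteq> S \<and> fg_prod ws = g" by blast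
  then have "\<exists>ws. length ws = (LEAST n. \<exists>ws. length ws = n \<and> set ws \<subseteq> S \<and> fg_prod ws = g)
      \<and> set ws \<subseteq> S \<and> fg_prod ws = g"
    by (rule LeastI_ex)
  then obtain ws where ws: "length ws = word_length S g" "set ws \<subseteq> S" "fg_prod ws = g"
    unfolding word_length_def by blast
  define L where "L = Max (insert 1 (length ` S))"
  have fin: "finite S" using g by (simp add: fin_sym_gen_set_def)
  have "\<forall>w\<in>set ws. length w \<le> L" using ws(2) fin unfolding L_def by (auto intro: Max_ge)
  then have "sum_list (map length ws) \<le> length ws * L" by (rule sum_len_le)
  then have "length g \<le> word_length S g * L" using len_fg_prod[of ws] ws by simp
  then have "real (length g) \<le> real (word_length S g * L)" by (simp only: of_nat_le_iff)
  then show ?thesis unfolding L_def by (simp add: mult.commute)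
qed



(* ---- F.thy ---- *)

lemma linv_linv: "linv (linv a) = a" by (cases a) (simp add: linv_def)

locale mainl = plane P u1 u2 for P u1 u2 +
  fixes \<rho> :: "('a::finite) fword \<Rightarrow> real^3^3" and S :: "'a fword set"
  assumes card2: "CARD('a) \<ge> 2" and gen: "fin_sym_gen_set S"
    and rs: "reducible_suspension \<rho> P" and qi: "quasi_isometric S \<rho>"
begin

lemma carrier_iff: "g \<in> fg_carrier \<longleftrightarrow> fg_reduced g" by (simp add: fg_carrier_def)

lemma rho_hom: "g \<in> fg_carrier \<Longrightarrow> h \<in> fg_carrier \<Longrightarrow> \<rho> (fg_mult g h) = \<rho> g ** \<rho> h"
  using rs by (simp add: reducible_suspension_def is_SL3_rep_def)

lemma rho_det: "g \<in> fg_carrier \<Longrightarrow> det (\<rho> g) = 1"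
  using rs by (simp add: reducible_suspension_def is_SL3_rep_def)

lemma rho_pres: "g \<in> fg_carrier \<Longrightarrow> pres (\<rho> g)"
  using rs by (simp add: reducible_suspension_def pres_def)

lemma nil_c: "[] \<in> fg_carrier" by (simp add: carrier_iff)

lemma rho_nil: "\<rho> [] = mat 1"
proof -
  define A where "A = \<rho> []"
  have AA: "A = A ** A" using rho_hom[OF nil_c nil_c] by (simp add: A_def fg_mult_Nil)
  have "invertible A" using rho_det[OF nil_c] by (simp add: A_def invertible_det_nz)
  then obtain A' where A': "A ** A' = mat 1" unfolding invertible_def by blast
  have e1: "(A ** A) ** A' = A" by (simp only: matrix_mul_assoc[symmetric] A' matrix_mul_rid)
  have e2: "(A ** A) ** A' = mat 1" unfolding AA[symmetric] by (rule A')
  show ?thesis using e1 e2 by (simp add: A_def)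
qed

lemma rho_inv: assumes "g \<in> fg_carrier" shows "\<rho> g *v (\<rho> (fg_inv g) *v x) = x"
proof -
  have "fg_inv g \<in> fg_carrier" using assms fg_red_inv by (simp add: carrier_iff)
  then have "\<rho> (fg_mult g (fg_inv g)) = \<rho> g ** \<rho> (fg_inv g)" by (rule rho_hom[OF assms])
  then have "\<rho> g ** \<rho> (fg_inv g) = mat 1" using fg_mult_inv[of g] rho_nil by simp
  then show ?thesis by (simp add: matrix_vector_mul_assoc)
qed

lemma dt_lam: "g \<in> fg_carrier \<Longrightarrow> dt (\<rho> g) * lam (\<rho> g) = 1"
  using det_lam[OF rho_pres] rho_det by simp

lemma dt_nz: "g \<in> fg_carrier \<Longrightarrow> dt (\<rho> g) \<noteq> 0"
  using dt_lam by force

lemma rhoP_eq: "g \<in> fg_carrier \<Longrightarrow> rho_P \<rho> P g = (\<lambda>x. inverse (sqrt \<bar>dt (\<rho> g)\<bar>) *\<^sub>R (\<rho> g *v x))"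
  by (rule ext) (simp add: rho_P_def detP_eq[OF rho_pres])

lemma onorm_pos: assumes "g \<in> fg_carrier" shows "onorm ((*v) (\<rho> g)) > 0"
proof -
  have "\<rho> g *v (\<rho> (fg_inv g) *v axis 1 1) = axis 1 1" by (rule rho_inv[OF assms])
  then have "\<not> (\<forall>x. \<rho> g *v x = 0)" by (metis axis_nth zero_index zero_neq_one)
  then show ?thesis using onorm_pos_lt[OF matrix_vector_mul_bounded_linear] by blast
qed

lemma rho_wpow: assumes "cycred c" shows "\<rho> (wpow c k) *v x = (((*v) (\<rho> c)) ^^ k) x"
proof (induction k arbitrary: x)
  case 0 then show ?case by (simp add: wpow_0 rho_nil)
next
  case (Suc k)
  have cc: "c \<in> fg_carrier" using assms by (simp add: cycred_def carrier_iff)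
  have wc: "wpow c k \<in> fg_carrier" using wpow_red[OF assms] by (simp add: carrier_iff)
  have "\<rho> (wpow c (Suc k)) = \<rho> c ** \<rho> (wpow c k)"
    using wpow_mult[OF assms, of k] rho_hom[OF cc wc] by simp
  then show ?case using Suc by (simp add: matrix_vector_mul_assoc[symmetric])
qed

lemma rho_fam:
  assumes "cycred c" "y \<noteq> fst (last c)"
  shows "\<rho> (fam c y k) *v x = (((*v) (\<rho> c)) ^^ k) (\<rho> [(y,True)] *v ((((*v) (\<rho> (fg_inv c))) ^^ k) x))"
proof -
  have ci: "cycred (fg_inv c)" using cycred_inv[OF assms(1)] .
  have r: "fg_reduced (fam c y k)" using fam_red[OF assms] .
  have r2: "fg_reduced ([(y,True)] @ wpow (fg_inv c) k)"
    using r unfolding fam_def fg_reduced_succ successively_append_iff by auto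
  have c1: "wpow c k \<in> fg_carrier" using wpow_red[OF assms(1)] by (simp add: carrier_iff)
  have c2: "wpow (fg_inv c) k \<in> fg_carrier" using wpow_red[OF ci] by (simp add: carrier_iff)
  have c3: "[(y,True)] \<in> fg_carrier" by (simp add: carrier_iff)
  have c4: "fg_mult [(y,True)] (wpow (fg_inv c) k) \<in> fg_carrier"
    using r2 fg_mult_app[OF r2] by (simp add: carrier_iff)
  have "\<rho> (fam c y k) = \<rho> (wpow c k) ** (\<rho> [(y,True)] ** \<rho> (wpow (fg_inv c) k))"
    using fam_mult[OF assms, of k] rho_hom[OF c1 c4] rho_hom[OF c3 c2] by simp
  then show ?thesis by (simp add: matrix_vector_mul_assoc[symmetric] rho_wpow[OF assms(1)] rho_wpow[OF ci])
qed

lemma exists_other: "\<exists>y::'a. y \<noteq> x"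
proof (rule ccontr)
  assume "\<not> (\<exists>y::'a. y \<noteq> x)"
  then have e: "(UNIV::'a set) = {x}" by auto
  have "card (UNIV::'a set) = card {x}" by (simp only: e)
  then show False using card2 by simp
qed

end



(* ---- G.thy ---- *)

context mainl begin

lemma core2:
  assumes cyc: "cycred c" and cd: "cond (tr (\<rho> c)) (dt (\<rho> c))" and l1: "\<bar>lam (\<rho> c)\<bar> \<ge> 1"
  shows False
proof -
  define M where "M = \<rho> c"
  define N where "N = \<rho> (fg_inv c)"
  have cC: "c \<in> fg_carrier" using cyc by (simp add: cycred_def carrier_iff)
  have cI: "fg_inv c \<in> fg_carrier" using cyc fg_red_inv by (auto simp: cycred_def carrier_iff)
  obtain y where y: "y \<noteq> fst (last c)" using exists_other by blast
  define Dm where "Dm = \<rho> [(y,True)]"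
  have yC: "[(y,True)] \<in> fg_carrier" by (simp add: carrier_iff)
  have pM: "pres M" and pN: "pres N" and pD: "pres Dm"
    using rho_pres cC cI yC by (auto simp: M_def N_def Dm_def)
  define d where "d = dt M"
  have dl: "d * lam M = 1" using dt_lam[OF cC] by (simp add: d_def M_def)
  have d0: "d \<noteq> 0" using dl by auto
  have MN: "\<And>x. M *v (N *v x) = x" unfolding M_def N_def by (rule rho_inv[OF cC])
  have ir: "dt M * dt N = 1" "tr N = tr M / dt M" using inv_rel[OF pM pN MN] by auto
  have dN: "dt N = 1 / d" using ir(1) d0 by (simp add: d_def field_simps)
  have cdN: "cond (tr N) (dt N)" using cond_inv[OF cd] ir(2) dN by (simp add: M_def d_def)
  have dNl: "dt N * lam N = 1" using dt_lam[OF cI] by (simp add: N_def)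
  obtain KM where KM: "KM > 0" "\<forall>k. \<forall>q\<in>P. norm ((((*v) M) ^^ k) q) \<le> KM * real (k+1) * sqrt \<bar>d\<bar> ^ k * norm q"
    using pow_bound[of P M "tr M" "dt M"] CH[OF pM] cd d0 by (auto simp: M_def d_def)
  obtain KN where KN: "KN > 0" "\<forall>k. \<forall>q\<in>P. norm ((((*v) N) ^^ k) q) \<le> KN * real (k+1) * sqrt \<bar>dt N\<bar> ^ k * norm q"
    using pow_bound[of P N "tr N" "dt N"] CH[OF pN] cdN dN d0 by auto
  define T where "T = sqrt \<bar>lam M\<bar>"
  have lamM: "lam M = 1 / d" using dl d0 by (simp add: field_simps)
  have T1: "T \<ge> 1" using l1 by (simp add: T_def M_def)
  have T0: "T > 0" using T1 by simp
  have sd: "sqrt \<bar>d\<bar> = 1 / T" unfolding T_def lamM by (simp add: real_sqrt_divide abs_divide)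
  have sdN: "sqrt \<bar>dt N\<bar> = T" unfolding T_def lamM dN ..
  have lM: "\<bar>lam M\<bar> = T^2" using T_def by simp
  have lamN: "lam N = d" using dNl dN d0 by (simp add: field_simps)
  have lN: "\<bar>lam N\<bar> = 1 / T^2" using lamN lM lamM d0 by (simp add: abs_divide) (metis divide_divide_eq_right div_by_1 nonzero_mult_div_cancel_left zero_less_abs_iff less_numeral_extra(3) divide_self_if mult_1)
  define K where "K = max KM KN"
  have K0: "K \<ge> 0" using KM by (simp add: K_def)
  have bM: "\<forall>k. \<forall>q\<in>P. norm ((((*v) M) ^^ k) q) \<le> K * real (k+1) * (1/T) ^ k * norm q"
  proof (intro allI ballI)
    fix k q assume q: "q \<in> P"
    have "norm ((((*v) M) ^^ k) q) \<le> KM * real (k+1) * (1/T) ^ k * norm q" using KM(2) q sd by simp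
    also have "\<dots> \<le> K * real (k+1) * (1/T) ^ k * norm q"
      using T0 by (intro mult_right_mono) (auto simp: K_def)
    finally show "norm ((((*v) M) ^^ k) q) \<le> K * real (k+1) * (1/T) ^ k * norm q" .
  qed
  have bN: "\<forall>k. \<forall>q\<in>P. norm ((((*v) N) ^^ k) q) \<le> K * real (k+1) * T ^ k * norm q"
  proof (intro allI ballI)
    fix k q assume q: "q \<in> P"
    have "norm ((((*v) N) ^^ k) q) \<le> KN * real (k+1) * T ^ k * norm q" using KN(2) q sdN by simp
    also have "\<dots> \<le> K * real (k+1) * T ^ k * norm q"
      using T0 by (intro mult_right_mono) (auto simp: K_def)
    finally show "norm ((((*v) N) ^^ k) q) \<le> K * real (k+1) * T ^ k * norm q" .
  qed
  obtain C where C: "\<forall>k x. norm ((((*v) M) ^^ k) (Dm *v ((((*v) N) ^^ k) x))) \<le> C * real (k+1) ^ 3 * norm x"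
    using conj_bound[OF pM pN pD T1 K0 bM bN lM lN] by blast
  obtain a b where ab: "a \<ge> 1" "b \<ge> 0"
    "\<forall>g\<in>fg_carrier. ln (onorm (\<lambda>x. \<rho> g *v x)) \<ge> real (word_length S g) / a - b"
    using qi unfolding quasi_isometric_def by blast
  define L where "L = real (Max (insert 1 (length ` S)))"
  have L1: "L \<ge> 1"
  proof -
    have "finite S" using gen by (simp add: fin_sym_gen_set_def)
    then have "1 \<le> Max (insert 1 (length ` S))" by simp
    then show ?thesis by (simp add: L_def)
  qed
  have key: "1 / (L * a) * (2 * real k + 1) - b \<le> ln (C * real (k+1) ^ 3) \<and> C > 0" for k
  proof -
    define h where "h = fam c y k"
    have hC: "h \<in> fg_carrier" using fam_red[OF cyc y] by (simp add: h_def carrier_iff)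
    have on: "onorm ((*v) (\<rho> h)) \<le> C * real (k+1) ^ 3"
    proof (rule onorm_le)
      fix x show "norm (\<rho> h *v x) \<le> C * real (k+1) ^ 3 * norm x"
        using C rho_fam[OF cyc y, of k x] by (simp add: h_def M_def N_def Dm_def)
    qed
    have op: "onorm ((*v) (\<rho> h)) > 0" by (rule onorm_pos[OF hC])
    have "C * real (k+1) ^ 3 > 0" using on op by linarith
    then have Cp: "C > 0" by (auto simp: zero_less_mult_iff)
    have "real (word_length S h) / a - b \<le> ln (onorm ((*v) (\<rho> h)))" using ab(3) hC by simp
    also have "\<dots> \<le> ln (C * real (k+1) ^ 3)" using on op by simp
    finally have w: "real (word_length S h) / a - b \<le> ln (C * real (k+1) ^ 3)" .
    have "real (2 * k + 1) \<le> real (length h)" using fam_len[OF cyc, where y=y and k=k] by (simp add: h_def)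
    also have "\<dots> \<le> L * real (word_length S h)" unfolding L_def by (rule word_length_bound[OF gen hC])
    finally have "(2 * real k + 1) / L \<le> real (word_length S h)" using L1 by (simp add: field_simps)
    then have "(2 * real k + 1) / L / a \<le> real (word_length S h) / a" using ab(1) by (intro divide_right_mono) auto
    then have "1 / (L * a) * (2 * real k + 1) \<le> real (word_length S h) / a" by (simp add: field_simps)
    then show ?thesis using w Cp by linarith
  qed
  have "1 / (L * a) > 0" using L1 ab(1) by simp
  moreover have "C > 0" using key[of 0] by blast
  ultimately show False using growth_contra[of "1 / (L * a)" C b] key by blast
qed

end


(* ---- H1.thy ---- *)

context mainl begin

lemma core:
  assumes cyc: "cycred c" and nh: "\<not> hyperbolic_on P (rho_P \<rho> P c)"
  shows False
proof -
  have cC: "c \<in> fg_carrier" using cyc by (simp add: cycred_def carrier_iff)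
  have cI: "fg_inv c \<in> fg_carrier" using cyc fg_red_inv by (auto simp: cycred_def carrier_iff)
  define M where "M = \<rho> c"
  define N where "N = \<rho> (fg_inv c)"
  have pM: "pres M" and pN: "pres N" using rho_pres cC cI by (auto simp: M_def N_def)
  have d0: "dt M \<noteq> 0" using dt_nz[OF cC] by (simp add: M_def)
  have s0: "inverse (sqrt \<bar>dt M\<bar>) \<noteq> 0" using d0 by simp
  have cd: "cond (tr M) (dt M)"
    using nonhyp_cond[OF pM d0 s0] nh rhoP_eq[OF cC] by (simp add: M_def)
  show False
  proof (cases "\<bar>lam M\<bar> \<ge> 1")
    case True then show False using core2[OF cyc] cd by (simp add: M_def)
  next
    case False
    have MN: "\<And>x. M *v (N *v x) = x" unfolding M_def N_def by (rule rho_inv[OF cC])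
    have ir: "dt M * dt N = 1" "tr N = tr M / dt M" using inv_rel[OF pM pN MN] by auto
    have dN: "dt N = 1 / dt M" using ir(1) d0 by (simp add: field_simps)
    have cdN: "cond (tr N) (dt N)" using cond_inv[OF cd] ir(2) dN by simp
    have dl: "dt M * lam M = 1" using dt_lam[OF cC] by (simp add: M_def)
    have dNl: "dt N * lam N = 1" using dt_lam[OF cI] by (simp add: N_def)
    have "lam N = dt M" using dNl dN d0 by (simp add: field_simps)
    moreover have "lam M = 1 / dt M" using dl d0 by (simp add: field_simps)
    ultimately have "\<bar>lam N\<bar> \<ge> 1" using False d0
      by (simp add: abs_divide)
    then show False using core2[OF cycred_inv[OF cyc]] cdN by (simp add: N_def)
  qed
qed

end


(* ---- H2.thy ---- *)
lemma succ_tl: "successively R (x # xs) \<Longrightarrow> successively R xs"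
  by (cases xs) auto

context mainl begin
lemma transfer:
  assumes g: "g = [a] @ g' @ [linv a]" and rg: "fg_reduced g" and rg': "fg_reduced g'"
    and hyp: "hyperbolic_on P (rho_P \<rho> P g')"
  shows "hyperbolic_on P (rho_P \<rho> P g)"
proof -
  have rg2: "fg_reduced ([a] @ g' @ [linv a])" using rg by (simp only: g)
  have "successively (\<lambda>p q. \<not> fcancel p q) (a # (g' @ [linv a]))"
    using rg2 unfolding fg_reduced_succ by (simp only: append_Cons append_Nil)
  then have r1: "fg_reduced (g' @ [linv a])" unfolding fg_reduced_succ by (rule succ_tl)
  have gm: "g = fg_mult [a] (fg_mult g' [linv a])"
    by (simp only: fg_mult_app[OF r1] fg_mult_app[OF rg2] g)
  have ca: "[a] \<in> fg_carrier" and cb: "[linv a] \<in> fg_carrier" and cg': "g' \<in> fg_carrier"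
    and c1: "fg_mult g' [linv a] \<in> fg_carrier" and cg: "g \<in> fg_carrier"
    using rg' r1 fg_mult_app[OF r1] rg by (auto simp: carrier_iff)
  define A where "A = \<rho> [a]"
  define A' where "A' = \<rho> [linv a]"
  have rg_eq: "\<rho> g = A ** (\<rho> g' ** A')"
    using gm rho_hom[OF ca c1] rho_hom[OF cg' cb] by (simp add: A_def A'_def)
  have "fg_cons (linv a) (linv (linv a) # []) = []" by (rule fg_cons_linv)
  then have fm: "fg_mult [linv a] [a] = []" by (simp add: fg_mult_Cons fg_mult_Nil linv_linv)
  have AA: "A' ** A = mat 1" using rho_hom[OF cb ca] unfolding fm rho_nil by (simp add: A_def A'_def)
  have A'A: "A' *v (A *v x) = x" for x
    by (simp add: matrix_vector_mul_assoc AA)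
  have pA: "pres A" using rho_pres[OF ca] by (simp add: A_def)
  define \<sigma> where "\<sigma> = inverse (sqrt \<bar>dt (\<rho> g)\<bar>)"
  define \<sigma>' where "\<sigma>' = inverse (sqrt \<bar>dt (\<rho> g')\<bar>)"
  have s0: "\<sigma> \<noteq> 0" using dt_nz[OF cg] by (simp add: \<sigma>_def)
  have s0': "\<sigma>' \<noteq> 0" using dt_nz[OF cg'] by (simp add: \<sigma>'_def)
  obtain l1 l2 v1 v2 where h: "v1 \<in> P" "v2 \<in> P" "v1 \<noteq> 0" "v2 \<noteq> 0"
    "\<sigma>' *\<^sub>R (\<rho> g' *v v1) = l1 *\<^sub>R v1" "\<sigma>' *\<^sub>R (\<rho> g' *v v2) = l2 *\<^sub>R v2" "\<bar>l1\<bar> \<noteq> \<bar>l2\<bar>"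
    using hyp unfolding hyperbolic_on_def rhoP_eq[OF cg'] \<sigma>'_def by blast
  have ev: "\<sigma> *\<^sub>R (\<rho> g *v (A *v v)) = (\<sigma> * l / \<sigma>') *\<^sub>R (A *v v)"
    if "\<sigma>' *\<^sub>R (\<rho> g' *v v) = l *\<^sub>R v" for v l
  proof -
    have "\<rho> g' *v v = inverse \<sigma>' *\<^sub>R (\<sigma>' *\<^sub>R (\<rho> g' *v v))" using s0' by simp
    also have "\<dots> = (l / \<sigma>') *\<^sub>R v" unfolding that by (simp add: divide_inverse mult.commute)
    finally have "\<rho> g' *v v = (l / \<sigma>') *\<^sub>R v" .
    then have "\<rho> g *v (A *v v) = (l / \<sigma>') *\<^sub>R (A *v v)"
      unfolding rg_eq by (simp add: matrix_vector_mul_assoc[symmetric] A'A matrix_vector_mult_scaleR)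
    then show ?thesis by simp
  qed
  have nz: "A *v v \<noteq> 0" if "v \<noteq> 0" for v
    using A'A[of v] that by (metis matrix_vector_mult_0_right)
  have w1: "A *v v1 \<in> P" "A *v v2 \<in> P" using pA h(1,2) by (auto simp: pres_def)
  have w2: "A *v v1 \<noteq> 0" "A *v v2 \<noteq> 0" using nz h(3,4) by auto
  have ab: "\<bar>\<sigma> * l1 / \<sigma>'\<bar> \<noteq> \<bar>\<sigma> * l2 / \<sigma>'\<bar>" using h(7) s0 s0' by (simp add: abs_mult abs_divide)
  show ?thesis
    unfolding hyperbolic_on_def rhoP_eq[OF cg] \<sigma>_def[symmetric]
    using w1 w2 ab ev[OF h(5)] ev[OF h(6)] by blast
qed

lemma all_hyp: "fg_reduced g \<Longrightarrow> g \<noteq> [] \<Longrightarrow> hyperbolic_on P (rho_P \<rho> P g)"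
proof (induction "length g" arbitrary: g rule: less_induct)
  case less
  show ?case
  proof (cases "cycred g")
    case True then show ?thesis using core by blast
  next
    case False
    obtain a g' where d: "g = [a] @ g' @ [linv a]" "g' \<noteq> []" "fg_reduced g'"
      using decomp_noncyc[OF less.prems False] by blast
    have "length g' < length g" using d(1) by simp
    then have "hyperbolic_on P (rho_P \<rho> P g')" using less.hyps d by blast
    then show ?thesis using transfer[OF d(1) less.prems(1) d(3)] by blast
  qed
qed

end



theorem mainTheorem14:
  fixes \<rho> :: "('a::finite) fword \<Rightarrow> real^3^3"
    and P :: "(real^3) set"
    and S :: "'a fword set"
  assumes "CARD('a) \<ge> 2"
    and "fin_sym_gen_set S"
    and "reducible_suspension \<rho> P"
    and "quasi_isometric S \<rho>"
  shows "\<forall>g\<in>fg_carrier. g \<noteq> [] \<longrightarrow> hyperbolic_on P (rho_P \<rho> P g)"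
proof -
  have sub: "subspace P" and dP: "dim P = 2" using assms(3) by (auto simp: reducible_suspension_def)
  obtain B where B: "B \<subseteq> P" "pairwise orthogonal B" "\<And>x. x \<in> B \<Longrightarrow> norm x = 1"
    "independent B" "card B = dim P" "span B = P"
    using orthonormal_basis_subspace[OF sub] by blast
  obtain u1 u2 where u: "B = {u1, u2}" "u1 \<noteq> u2" using B(5) dP card_2_iff by metis
  have o: "u1 \<bullet> u2 = 0" using B(2) u by (auto simp: pairwise_def orthogonal_def)
  interpret mainl P u1 u2 \<rho> S
  proof (unfold_locales)
    show "subspace P" by (rule sub)
    show "u1 \<in> P" "u2 \<in> P" using B(1) u by auto
    show "norm u1 = 1" "norm u2 = 1" using B(3) u by auto
    show "u1 \<bullet> u2 = 0" by (rule o)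
    show "span {u1, u2} = P" using B(6) u by simp
  qed (use assms in auto)
  show ?thesis using all_hyp carrier_iff by blast
qed

end
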